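(* Let $d\ge2$, let $\mu\ge0$ be a finite measure with compact support in $\mathbb{R}^d$, let $\lambda,\varepsilon>0$, $p\ge1$, and let $M\ge\inf_{\mathcal{C}}\mathcal{E}_\mu^{\lambda,\varepsilon,p}$. Then for every sequence $\{\varphi_n\}\subseteq\mathcal{C}$ with $\mathcal{E}_\mu^{\lambda,\varepsilon,p}(\varphi_n)\le M$ for all $n$, there exist $\varphi_\infty\in\mathcal{C}$ and a subsequence of $\{\varphi_n\}$ converging to $\varphi_\infty$ with respect to the metric $m$.
   Context: $\mathcal{C}$ denotes the set of curves $\varphi:[0,a]\to\mathbb{R}^d$, $a\ge 0$, that are Lipschitz with $|\varphi'|=1$ a.e.; the length $L(\varphi)$ is its total variation, which equals $a$. $\Gamma_\varphi$ is the image of $\varphi$, $d(x,\Gamma)=\inf_{y\in\Gamma}|x-y|$, and $\kappa_\varphi=\varphi''$. The functional is $\mathcal{E}_\mu^{\lambda,\varepsilon,p}(\varphi)=\int d(x,\Gamma_\varphi)^p\,d\mu+\lambda L(\varphi)+\varepsilon\int_0^{L(\varphi)}|\kappa_\varphi|^2dt$ if $\varphi\in H^2([0,L(\varphi)];\mathbb{R}^d)\cap\mathcal{C}$ and $+\infty$ otherwise (a single-point curve has curvature term $0$). For $\varphi\in\mathcal{C}$, $\Phi(\varphi):[0,1]\to\mathbb{R}^d$, $\Phi(\varphi)(t)=\varphi(tL(\varphi))$, is its constant-speed reparameterization. The metric on $\mathcal{C}$ is $$m(\varphi,\psi)=\min\big\{\|\Phi(\varphi)-\Phi(\psi)\|_{L^\infty},\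 \|\Phi(\varphi(L(\varphi)-\cdot))-\Phi(\psi)\|_{L^\infty}\big\}+|L(\varphi)-L(\psi)|.$$ *)

theory Defs
  imports "HOL-Analysis.Analysis"
begin

text \<open>A curve is represented as a pair (a, phi) with phi : [0,a] -> 'a;
  values of phi outside [0,a] are irrelevant.\<close>
type_synonym 'a curve = "real \<times> (real \<Rightarrow> 'a)"

definition curves :: "'a::euclidean_space curve set" where
  "curves = {(a, \<phi>). a \<ge> 0 \<and> (\<exists>K. K-lipschitz_on {0..a} \<phi>) \<and>
     (AE t in lborel. t \<in> {0..a} \<longrightarrow>
        (\<exists>v. (\<phi> has_vector_derivative v) (at t within {0..a}) \<and> norm v = 1))}"

definition curve_len :: "'a curve \<Rightarrow> real" where
  "curve_len c = fst c"

definition curve_image :: "'a curve \<Rightarrow> 'a set" where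
  "curve_image c = snd c ` {0..fst c}"

text \<open>kappa is a weak second derivative of phi on [0,L] lying in L^2:
  phi' is absolutely continuous (an integral of kappa) and phi is the integral of phi'.\<close>
definition H2_witness :: "real \<Rightarrow> (real \<Rightarrow> 'a::euclidean_space) \<Rightarrow> (real \<Rightarrow> 'a) \<Rightarrow> bool" where
  "H2_witness L \<phi> \<kappa> \<longleftrightarrow>
     \<kappa> \<in> borel_measurable lborel \<and>
     set_integrable lborel {0..L} \<kappa> \<and>
     set_integrable lborel {0..L} (\<lambda>t. (norm (\<kappa> t))\<^sup>2) \<and>
     (\<exists>v. set_integrable lborel {0..L} v \<and>
        (\<forall>t\<in>{0..L}. v t = v 0 + (\<integral>s\<in>{0..t}. \<kappa> s \<partial>lborel) \<and>
                     \<phi> t = \<phi> 0 + (\<integral>s\<in>{0..t}. v s \<partial>lborel)))"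

definition in_H2 :: "'a::euclidean_space curve \<Rightarrow> bool" where
  "in_H2 c \<longleftrightarrow> (\<exists>\<kappa>. H2_witness (fst c) (snd c) \<kappa>)"

text \<open>Elastic term: integral of |kappa|^2 (kappa is unique a.e., so the infimum
  over all weak second derivatives is just this value).\<close>
definition curv_energy :: "'a::euclidean_space curve \<Rightarrow> real" where
  "curv_energy c = Inf {(\<integral>t\<in>{0..fst c}. (norm (\<kappa> t))\<^sup>2 \<partial>lborel) | \<kappa>. H2_witness (fst c) (snd c) \<kappa>}"

definition energy :: "'a::euclidean_space measure \<Rightarrow> real \<Rightarrow> real \<Rightarrow> real \<Rightarrow> 'a curve \<Rightarrow> ereal" where
  "energy \<mu> lam eps p c =
     (if c \<in> curves \<and> in_H2 c
      then enn2ereal (\<integral>\<^sup>+ x. ennreal ((infdist x (curve_image c)) powr p) \<partial>\<mu>)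
           + ereal (lam * curve_len c + eps * curv_energy c)
      else \<infinity>)"

definition Phi :: "'a curve \<Rightarrow> real \<Rightarrow> 'a" where
  "Phi c t = snd c (t * fst c)"

definition Phi_rev :: "'a curve \<Rightarrow> real \<Rightarrow> 'a" where
  "Phi_rev c t = snd c (fst c - t * fst c)"

definition curve_metric :: "'a::euclidean_space curve \<Rightarrow> 'a curve \<Rightarrow> real" where
  "curve_metric c1 c2 =
     min (SUP t\<in>{0..1}. norm (Phi c1 t - Phi c2 t))
         (SUP t\<in>{0..1}. norm (Phi_rev c1 t - Phi c2 t))
     + \<bar>fst c1 - fst c2\<bar>"

end

theory Submission
  imports Defs "HOL-Complex_Analysis.Great_Picard"
begin



lemma vd_bound:
  fixes f :: "real \<Rightarrow> 'a::real_normed_vector"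
  assumes "convex S" "\<And>x. x\<in>S \<Longrightarrow> (f has_vector_derivative f' x) (at x within S)"
    "\<And>x. x\<in>S \<Longrightarrow> norm (f' x) \<le> B" "x \<in> S" "y \<in> S"
  shows "norm (f x - f y) \<le> B * \<bar>x - y\<bar>"
proof -
  have "norm (f x - f y) \<le> B * norm (x - y)"
  proof (rule differentiable_bound[OF assms(1) _ _ assms(4,5)])
    show "(f has_derivative (\<lambda>h. h *\<^sub>R f' z)) (at z within S)" if "z \<in> S" for z
      using assms(2)[OF that] by (simp add: has_vector_derivative_def)
    show "onorm (\<lambda>h. h *\<^sub>R f' z) \<le> B" if "z \<in> S" for z
      using assms(3)[OF that] onorm_scaleR_left[of "\<lambda>x. x" "f' z"] by (simp add: onorm_id bounded_linear_ident)
  qed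
  then show ?thesis by simp
qed



lemma sq_int_nonneg: "0 \<le> (\<integral>t\<in>A. (norm (\<kappa> t))\<^sup>2 \<partial>lborel)"
  unfolding set_lebesgue_integral_def
  by (rule Bochner_Integration.integral_nonneg) (auto simp: indicator_def)

lemma curv_energy_nonneg:
  assumes "in_H2 c" shows "0 \<le> curv_energy c"
  unfolding curv_energy_def
  using assms unfolding in_H2_def
  by (intro cInf_greatest) (auto simp: sq_int_nonneg)

lemma curv_energy_witness:
  assumes "in_H2 c" "curv_energy c < C"
  shows "\<exists>\<kappa>. H2_witness (fst c) (snd c) \<kappa> \<and> (\<integral>t\<in>{0..fst c}. (norm (\<kappa> t))\<^sup>2 \<partial>lborel) < C"
proof -
  have "{(\<integral>t\<in>{0..fst c}. (norm (\<kappa> t))\<^sup>2 \<partial>lborel) | \<kappa>. H2_witness (fst c) (snd c) \<kappa>} \<noteq> {}"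
    using assms(1) unfolding in_H2_def by auto
  from cInf_lessD[OF this assms(2)[unfolded curv_energy_def]] show ?thesis by auto
qed

lemma energy_bounds:
  assumes "energy \<mu> lam eps p c \<le> ereal M" "lam > 0" "eps > 0"
  shows "c \<in> curves" "in_H2 c" "fst c \<le> M/lam" "curv_energy c \<le> M/eps"
    "(\<integral>\<^sup>+ x. ennreal ((infdist x (curve_image c)) powr p) \<partial>\<mu>) \<le> ennreal M" "0 \<le> M"
proof -
  have c: "c \<in> curves \<and> in_H2 c"
    using assms(1) unfolding energy_def by (auto split: if_splits)
  then show "c \<in> curves" "in_H2 c" by auto
  have L0: "fst c \<ge> 0" using c unfolding curves_def by auto
  have E0: "curv_energy c \<ge> 0" using c curv_energy_nonneg by blast
  define X where "X = (\<integral>\<^sup>+ x. ennreal ((infdist x (curve_image c)) powr p) \<partial>\<mu>)"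
  have le: "enn2ereal X + ereal (lam * curve_len c + eps * curv_energy c) \<le> ereal M"
    using assms(1) c unfolding energy_def X_def by auto
  have "X \<noteq> top" using le by (cases X) auto
  then obtain x where x: "X = ennreal x" "x \<ge> 0" by (cases X) auto
  have le2: "x + (lam * fst c + eps * curv_energy c) \<le> M"
    using le x by (simp add: curve_len_def)
  have "lam * fst c \<le> M" using le2 x E0 assms(3) by (smt (verit) mult_nonneg_nonneg)
  then show "fst c \<le> M/lam" using assms(2) by (simp add: pos_le_divide_eq mult.commute)
  have "eps * curv_energy c \<le> M" using le2 x L0 assms(2) by (smt (verit) mult_nonneg_nonneg)
  then show "curv_energy c \<le> M/eps" using assms(3) by (simp add: pos_le_divide_eq mult.commute)
  show "0 \<le> M" using le2 x L0 E0 assms(2,3) by (smt (verit) mult_nonneg_nonneg)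
  have "x \<le> M" using le2 x L0 E0 assms(2,3) by (smt (verit) mult_nonneg_nonneg)
  then show "X \<le> ennreal M" using x by simp
qed



lemma sq_bound:
  fixes a y :: real assumes "a > 0"
  shows "y \<le> 1/(2*a) + a/2 * y\<^sup>2"
proof -
  have "0 \<le> (a*y - 1)\<^sup>2" by simp
  then have "2*a*y \<le> 1 + a\<^sup>2 * y\<^sup>2" by (simp add: power2_eq_square algebra_simps)
  then show ?thesis using assms by (simp add: field_simps power2_eq_square)
qed

lemma curve_key:
  fixes \<phi> :: "real \<Rightarrow> 'a::euclidean_space"
  assumes cur: "(L, \<phi>) \<in> curves" and W: "H2_witness L \<phi> \<kappa>"
    and C: "(\<integral>t\<in>{0..L}. (norm (\<kappa> t))\<^sup>2 \<partial>lborel) \<le> C"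
  obtains v where
   "\<And>t. t\<in>{0..L} \<Longrightarrow> (\<phi> has_vector_derivative v t) (at t within {0..L})"
   "L > 0 \<Longrightarrow> \<forall>t\<in>{0..L}. norm (v t) = 1"
   "\<And>a s t. a > 0 \<Longrightarrow> s\<in>{0..L} \<Longrightarrow> t\<in>{0..L} \<Longrightarrow> norm (v t - v s) \<le> \<bar>t - s\<bar>/(2*a) + a*C/2"
proof -
  from W obtain v where
    ik: "set_integrable lborel {0..L} \<kappa>" and ik2: "set_integrable lborel {0..L} (\<lambda>t. (norm (\<kappa> t))\<^sup>2)"
    and iv: "set_integrable lborel {0..L} v"
    and eqs: "\<And>t. t\<in>{0..L} \<Longrightarrow> v t = v 0 + (\<integral>s\<in>{0..t}. \<kappa> s \<partial>lborel) \<and> \<phi> t = \<phi> 0 + (\<integral>s\<in>{0..t}. v s \<partial>lborel)"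
    unfolding H2_witness_def by blast
  have subI: "set_integrable lborel {a..b} f" if "set_integrable lborel {0..L} f" "0 \<le> a" "b \<le> L"
    for a b and f :: "real \<Rightarrow> 'b::{banach,second_countable_topology}"
    by (rule set_integrable_subset[OF that(1)]) (use that in auto)
  have kI: "\<kappa> integrable_on {a..b}" if "0 \<le> a" "b \<le> L" for a b
    using set_borel_integral_eq_integral(1)[OF subI[OF ik that]] .
  have vI: "v integrable_on {a..b}" if "0 \<le> a" "b \<le> L" for a b
    using set_borel_integral_eq_integral(1)[OF subI[OF iv that]] .
  have k2I: "(\<lambda>t. (norm (\<kappa> t))\<^sup>2) integrable_on {a..b}" if "0 \<le> a" "b \<le> L" for a b
    using set_borel_integral_eq_integral(1)[OF subI[OF ik2 that]] .
  have C': "integral {0..L} (\<lambda>t. (norm (\<kappa> t))\<^sup>2) \<le> C"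
    using C set_borel_integral_eq_integral(2)[OF ik2] by simp
  have veq: "v t = v 0 + integral {0..t} \<kappa>" if "t \<in> {0..L}" for t
    using eqs[OF that] set_borel_integral_eq_integral(2)[OF subI[OF ik, of 0 t]] that by auto
  have feq: "\<phi> t = \<phi> 0 + integral {0..t} v" if "t \<in> {0..L}" for t
    using eqs[OF that] set_borel_integral_eq_integral(2)[OF subI[OF iv, of 0 t]] that by auto
  have vcont: "continuous_on {0..L} v"
  proof -
    have "continuous_on {0..L} (\<lambda>t. v 0 + integral {0..t} \<kappa>)"
      by (intro continuous_intros indefinite_integral_continuous_1 kI) auto
    then show ?thesis using continuous_on_eq veq by (metis (no_types, lifting))
  qed
  have der: "(\<phi> has_vector_derivative v t) (at t within {0..L})" if "t \<in> {0..L}" for t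
  proof (rule has_vector_derivative_transform[OF that feq])
    show "((\<lambda>t. \<phi> 0 + integral {0..t} v) has_vector_derivative v t) (at t within {0..L})"
      using integral_has_vector_derivative[OF vcont that]
      by (auto intro!: derivative_eq_intros)
  qed
  have eqc: "norm (v t - v s) \<le> \<bar>t - s\<bar>/(2*a) + a*C/2"
    if a: "a > 0" and s: "s\<in>{0..L}" and t: "t\<in>{0..L}" for a s t
  proof -
    have main: "norm (v t - v s) \<le> (t - s)/(2*a) + a*C/2" if "s \<le> t" "s\<in>{0..L}" "t\<in>{0..L}" for s t
    proof -
      have "integral {0..s} \<kappa> + integral {s..t} \<kappa> = integral {0..t} \<kappa>"
        using Henstock_Kurzweil_Integration.integral_combine[where a=0 and c=s and b=t and f=\<kappa>] that kI[of 0 t] by auto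
      then have "v t - v s = integral {s..t} \<kappa>" using veq[OF that(2)] veq[OF that(3)]
        by (simp add: algebra_simps)
      also have "norm \<dots> \<le> integral {s..t} (\<lambda>x. 1/(2*a) + a/2 * (norm (\<kappa> x))\<^sup>2)"
      proof (rule integral_norm_bound_integral)
        show "\<kappa> integrable_on {s..t}" using kI that by auto
        have "(\<lambda>x. (norm (\<kappa> x))\<^sup>2) integrable_on {s..t}" using k2I that by auto
        then show "(\<lambda>x. 1/(2*a) + a/2 * (norm (\<kappa> x))\<^sup>2) integrable_on {s..t}"
          by (intro integrable_add) (use a in auto)
        show "norm (\<kappa> x) \<le> 1/(2*a) + a/2 * (norm (\<kappa> x))\<^sup>2" for x
          using sq_bound[OF a] by blast
      qed
      also have "\<dots> = (t - s)/(2*a) + a/2 * integral {s..t} (\<lambda>x. (norm (\<kappa> x))\<^sup>2)"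
      proof -
        have i2: "(\<lambda>x. (norm (\<kappa> x))\<^sup>2) integrable_on {s..t}" using k2I that by auto
        have "integral {s..t} (\<lambda>x. 1/(2*a) + a/2 * (norm (\<kappa> x))\<^sup>2)
            = integral {s..t} (\<lambda>x. 1/(2*a)) + integral {s..t} (\<lambda>x. a/2 * (norm (\<kappa> x))\<^sup>2)"
          by (rule Henstock_Kurzweil_Integration.integral_add) (use i2 a in auto)
        also have "integral {s..t} (\<lambda>x. a/2 * (norm (\<kappa> x))\<^sup>2) = a/2 * integral {s..t} (\<lambda>x. (norm (\<kappa> x))\<^sup>2)"
          using integral_mult[OF i2, of "a/2"] by simp
        finally show ?thesis using that by simp
      qed
      finally have n: "norm (v t - v s) \<le> (t - s)/(2*a) + a/2 * integral {s..t} (\<lambda>x. (norm (\<kappa> x))\<^sup>2)" .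
      have "integral {s..t} (\<lambda>x. (norm (\<kappa> x))\<^sup>2) \<le> integral {0..L} (\<lambda>x. (norm (\<kappa> x))\<^sup>2)"
        by (rule integral_subset_le) (use that k2I in auto)
      then have "integral {s..t} (\<lambda>x. (norm (\<kappa> x))\<^sup>2) \<le> C" using C' by linarith
      then have "a/2 * integral {s..t} (\<lambda>x. (norm (\<kappa> x))\<^sup>2) \<le> a/2 * C"
        using a by (intro mult_left_mono) auto
      then show ?thesis using n by simp
    qed
    show ?thesis
    proof (cases "s \<le> t")
      case True then show ?thesis using main[OF True s t] by simp
    next
      case False then show ?thesis using main[of t s] s t by (simp add: norm_minus_commute)
    qed
  qed
  have n1: "\<forall>t\<in>{0..L}. norm (v t) = 1" if L: "L > 0"
  proof -
    have ae0: "AE t in lborel. t \<in> {0..L} \<longrightarrow> (\<exists>w. (\<phi> has_vector_derivative w) (at t within {0..L}) \<and> norm w = 1)"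
      using cur unfolding curves_def by auto
    then have ae: "AE t in lborel. t \<in> {0..L} \<longrightarrow> norm (v t) = 1"
    proof (rule AE_mp, intro AE_I2 impI)
      fix t assume "t \<in> {0..L} \<longrightarrow> (\<exists>w. (\<phi> has_vector_derivative w) (at t within {0..L}) \<and> norm w = 1)"
        and t: "t \<in> {0..L}"
      then obtain w where w: "(\<phi> has_vector_derivative w) (at t within {0..L})" "norm w = 1" by auto
      have "v t = w"
        using vector_derivative_unique_within_closed_interval[of 0 L t \<phi> "v t" w] L t der[OF t] w by auto
      then show "norm (v t) = 1" using w by simp
    qed
    obtain N where N: "{t \<in> space lborel. \<not> (t \<in> {0..L} \<longrightarrow> norm (v t) = 1)} \<subseteq> N"
      "emeasure lborel N = 0" "N \<in> sets lborel"
      using ae by (rule AE_E)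
    have clo: "closed {t \<in> {0..L}. norm (v t) = 1}"
      by (intro continuous_closed_preimage_constant continuous_on_norm vcont) auto
    show ?thesis
    proof
      fix t assume t: "t \<in> {0..L}"
      have "t \<in> closure {t \<in> {0..L}. norm (v t) = 1}"
        unfolding closure_approachable
      proof (intro allI impI)
        fix e :: real assume e: "e > 0"
        define a where "a = max 0 (t - e/2)"
        define b where "b = min L (t + e/2)"
        have ab: "a < b" using L t e unfolding a_def b_def by auto
        have "\<not> {a..b} \<subseteq> N"
        proof
          assume "{a..b} \<subseteq> N"
          then have "emeasure lborel {a..b} \<le> emeasure lborel N" by (intro emeasure_mono) (use N in auto)
          then show False using N(2) ab by simp
        qed
        then obtain y where y: "y \<in> {a..b}" "y \<notin> N" by blast
        then have "y \<in> {0..L}" "norm (v y) = 1" using N(1) t L unfolding a_def b_def by auto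
        moreover have "dist y t < e" using y e unfolding a_def b_def dist_real_def by auto
        ultimately show "\<exists>y\<in>{t \<in> {0..L}. norm (v t) = 1}. dist y t < e" by auto
      qed
      then show "norm (v t) = 1" using clo closure_closed by auto
    qed
  qed
  show ?thesis using that der n1 eqc by blast
qed



lemma start_bound:
  fixes \<mu> :: "'a::euclidean_space measure" and \<phi> :: "real \<Rightarrow> 'a"
  assumes sets: "sets \<mu> = sets borel" and fin: "finite_measure \<mu>"
    and K: "compact K" "emeasure \<mu> (space \<mu> - K) = 0" "K \<subseteq> cball 0 R"
    and nz: "emeasure \<mu> (space \<mu>) \<noteq> 0" and p: "p \<ge> 1" and L: "0 \<le> L" "L \<le> B"
    and lip: "\<And>s t. s \<in> {0..L} \<Longrightarrow> t \<in> {0..L} \<Longrightarrow> norm (\<phi> s - \<phi> t) \<le> \<bar>s - t\<bar>"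
    and I: "(\<integral>\<^sup>+ x. ennreal ((infdist x (\<phi> ` {0..L})) powr p) \<partial>\<mu>) \<le> ennreal M" and M: "0 \<le> M"
  shows "norm (\<phi> 0) \<le> R + B + (max 1 (M / measure \<mu> (space \<mu>)) + 1)"
proof (rule ccontr)
  define m where "m = measure \<mu> (space \<mu>)"
  define D where "D = max 1 (M / m) + 1"
  assume "\<not> ?thesis"
  then have big: "norm (\<phi> 0) > R + B + D" unfolding D_def m_def by simp
  have sp: "space \<mu> = UNIV" using sets_eq_imp_space_eq[OF sets] by simp
  have em: "emeasure \<mu> (space \<mu>) = ennreal m"
    unfolding m_def using finite_measure.emeasure_eq_measure[OF fin] by simp
  have m0: "m > 0" using nz em measure_nonneg[of \<mu> "space \<mu>"] unfolding m_def
    by (metis ennreal_0 less_eq_real_def)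
  have Ks: "K \<in> sets \<mu>" using sets K(1) compact_imp_closed borel_closed by auto
  have eK: "emeasure \<mu> (space \<mu>) \<le> emeasure \<mu> K"
  proof -
    have "emeasure \<mu> (space \<mu>) \<le> emeasure \<mu> (K \<union> (space \<mu> - K))"
      by (intro emeasure_mono) (use Ks sets.top[of \<mu>] in \<open>auto simp: sp\<close>)
    also have "\<dots> \<le> emeasure \<mu> K + emeasure \<mu> (space \<mu> - K)"
      by (intro emeasure_subadditive) (use Ks in auto)
    finally show ?thesis using K(2) by simp
  qed
  have D1: "D \<ge> 1" unfolding D_def by simp
  have dist_ge: "infdist x (\<phi> ` {0..L}) \<ge> D" if x: "x \<in> K" for x
  proof -
    have "\<phi> ` {0..L} \<noteq> {}" using L by auto
    then have "infdist x (\<phi> ` {0..L}) = (INF y\<in>\<phi> ` {0..L}. dist x y)" by (rule infdist_notempty)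
    also have "\<dots> \<ge> D"
    proof (rule cINF_greatest)
      show "\<phi> ` {0..L} \<noteq> {}" using L by auto
      fix y assume "y \<in> \<phi> ` {0..L}"
      then obtain s where s: "s \<in> {0..L}" "y = \<phi> s" by auto
      have "norm (\<phi> s - \<phi> 0) \<le> B" using lip[OF s(1), of 0] s L by auto
      moreover have "norm x \<le> R" using x K(3) by auto
      moreover have "norm (\<phi> 0) \<le> norm x + norm (\<phi> s - \<phi> 0) + dist x (\<phi> s)"
      proof -
        have "norm (\<phi> 0) \<le> norm (x + (\<phi> s - x)) + norm (\<phi> s - \<phi> 0)"
          using norm_triangle_ineq4[of "x + (\<phi> s - x)" "\<phi> s - \<phi> 0"] by simp
        moreover have "norm (x + (\<phi> s - x)) \<le> norm x + norm (\<phi> s - x)" by (rule norm_triangle_ineq)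
        ultimately show ?thesis by (simp add: dist_norm norm_minus_commute)
      qed
      ultimately show "D \<le> dist x y" using big s by simp
    qed
    finally show ?thesis .
  qed
  have pw: "D \<le> infdist x (\<phi> ` {0..L}) powr p" if "x \<in> K" for x
  proof -
    have "D = D powr 1" using D1 by simp
    also have "\<dots> \<le> D powr p" using D1 p by (intro powr_mono) auto
    also have "\<dots> \<le> infdist x (\<phi> ` {0..L}) powr p" using dist_ge[OF that] D1 p by (intro powr_mono2) auto
    finally show ?thesis .
  qed
  have "ennreal D * emeasure \<mu> K = (\<integral>\<^sup>+ x. ennreal D * indicator K x \<partial>\<mu>)"
    using Ks by (simp add: nn_integral_cmult_indicator)
  also have "\<dots> \<le> (\<integral>\<^sup>+ x. ennreal ((infdist x (\<phi> ` {0..L})) powr p) \<partial>\<mu>)"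
    by (intro nn_integral_mono) (auto simp: indicator_def pw)
  also have "\<dots> \<le> ennreal M" by (rule I)
  finally have "ennreal D * emeasure \<mu> K \<le> ennreal M" .
  moreover have "ennreal D * ennreal m \<le> ennreal D * emeasure \<mu> K"
    using eK em by (intro mult_left_mono) auto
  ultimately have "ennreal (D * m) \<le> ennreal M" using D1 m0 by (simp add: ennreal_mult)
  then have "D * m \<le> M" using M by (simp add: ennreal_le_iff)
  moreover have "D * m \<ge> (M/m + 1) * m" using m0 unfolding D_def by (intro mult_right_mono) auto
  moreover have "(M/m + 1) * m = M + m" using m0 by (simp add: field_simps)
  ultimately show False using m0 by linarith
qed


lemma metric_small:
  assumes "\<And>t. t \<in> {0..1} \<Longrightarrow> norm (Phi c1 t - Phi c2 t) \<le> e"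
    "\<And>t. t \<in> {0..1} \<Longrightarrow> norm (Phi_rev c1 t - Phi c2 t) \<le> E"
  shows "0 \<le> curve_metric c1 c2" "curve_metric c1 c2 \<le> e + \<bar>fst c1 - fst c2\<bar>"
proof -
  define A where "A = (SUP t\<in>{0..1}. norm (Phi c1 t - Phi c2 t))"
  define A' where "A' = (SUP t\<in>{0..1}. norm (Phi_rev c1 t - Phi c2 t))"
  have "A \<le> e" unfolding A_def by (rule cSUP_least) (use assms in auto)
  have "0 \<le> A" unfolding A_def
    by (rule cSUP_upper2[of _ _ 0]) (use assms(1) in \<open>auto intro!: bdd_aboveI2[where M=e]\<close>)
  have "0 \<le> A'" unfolding A'_def
    by (rule cSUP_upper2[of _ _ 0]) (use assms(2) in \<open>auto intro!: bdd_aboveI2[where M=E]\<close>)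
  have m: "curve_metric c1 c2 = min A A' + \<bar>fst c1 - fst c2\<bar>"
    unfolding curve_metric_def A_def A'_def ..
  show "0 \<le> curve_metric c1 c2" unfolding m using \<open>0 \<le> A\<close> \<open>0 \<le> A'\<close> by simp
  show "curve_metric c1 c2 \<le> e + \<bar>fst c1 - fst c2\<bar>" unfolding m using \<open>A \<le> e\<close> by simp
qed

lemma curve_lip:
  fixes \<phi> :: "real \<Rightarrow> 'a::euclidean_space"
  assumes cur: "(L, \<phi>) \<in> curves" and W: "H2_witness L \<phi> \<kappa>"
    and st: "s \<in> {0..L}" "t \<in> {0..L}"
  shows "norm (\<phi> s - \<phi> t) \<le> \<bar>s - t\<bar>"
proof (cases "L > 0")
  case False then have "s = t" using st by auto
  then show ?thesis by simp
next
  case True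
  obtain v where d: "\<And>t. t\<in>{0..L} \<Longrightarrow> (\<phi> has_vector_derivative v t) (at t within {0..L})"
    and n: "L > 0 \<Longrightarrow> \<forall>t\<in>{0..L}. norm (v t) = 1"
    using curve_key[OF cur W order.refl] by metis
  show ?thesis using vd_bound[of "{0..L}" \<phi> v 1 s t] d n True st by auto
qed



theorem lemma2p3:
  fixes \<mu> :: "'a::euclidean_space measure"
    and lam eps p M :: real
    and \<phi> :: "nat \<Rightarrow> 'a curve"
  assumes "DIM('a) \<ge> 2"
    and "sets \<mu> = sets borel"
    and "finite_measure \<mu>"
    and "\<exists>K. compact K \<and> emeasure \<mu> (space \<mu> - K) = 0"
    and "emeasure \<mu> (space \<mu>) \<noteq> 0"
    and "lam > 0" and "eps > 0" and "p \<ge> 1"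
    and "(INF c\<in>curves. energy \<mu> lam eps p c) \<le> ereal M"
    and "\<And>n. \<phi> n \<in> curves"
    and "\<And>n. energy \<mu> lam eps p (\<phi> n) \<le> ereal M"
  shows "\<exists>\<psi>\<in>curves. \<exists>r. strict_mono r \<and> (\<lambda>n. curve_metric (\<phi> (r n)) \<psi>) \<longlonglongrightarrow> 0"
proof -
  note sets = assms(2) and fin = assms(3) and nz = assms(5) and lam = assms(6) and eps = assms(7)
    and p = assms(8) and En = assms(11)
  obtain K where K: "compact K" "emeasure \<mu> (space \<mu> - K) = 0" using assms(4) by blast
  obtain R where "\<forall>x\<in>K. norm x \<le> R"
    using compact_imp_bounded[OF K(1)] unfolding bounded_iff by blast
  then have R: "K \<subseteq> cball 0 R" by auto
  define B where "B = M / lam"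
  define C0 where "C0 = M / eps + 1"
  define L where "L n = fst (\<phi> n)" for n
  define f where "f n = snd (\<phi> n)" for n
  have M0: "0 \<le> M" using energy_bounds(6)[OF En[of 0] lam eps] .
  have B0: "0 \<le> B" unfolding B_def using M0 lam by simp
  have C0: "C0 \<ge> 1" unfolding C0_def using M0 eps by simp
  have cur: "(L n, f n) \<in> curves" for n using assms(10)[of n] unfolding L_def f_def by simp
  have L0: "0 \<le> L n" for n using cur[of n] unfolding curves_def by auto
  have LB: "L n \<le> B" for n using energy_bounds(3)[OF En[of n] lam eps] unfolding L_def B_def .
  have "\<exists>\<kappa>. H2_witness (L n) (f n) \<kappa> \<and> (\<integral>t\<in>{0..L n}. (norm (\<kappa> t))\<^sup>2 \<partial>lborel) < C0" for n
    using curv_energy_witness[OF energy_bounds(2)[OF En[of n] lam eps], of C0]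
      energy_bounds(4)[OF En[of n] lam eps] unfolding L_def f_def C0_def by fastforce
  then obtain \<kappa> where W: "\<And>n. H2_witness (L n) (f n) (\<kappa> n)"
    and WC: "\<And>n. (\<integral>t\<in>{0..L n}. (norm (\<kappa> n t))\<^sup>2 \<partial>lborel) < C0" by metis
  have "\<exists>v. (\<forall>t\<in>{0..L n}. (f n has_vector_derivative v t) (at t within {0..L n})) \<and>
      (L n > 0 \<longrightarrow> (\<forall>t\<in>{0..L n}. norm (v t) = 1)) \<and>
      (\<forall>a s t. a > 0 \<longrightarrow> s\<in>{0..L n} \<longrightarrow> t\<in>{0..L n} \<longrightarrow> norm (v t - v s) \<le> \<bar>t - s\<bar>/(2*a) + a*C0/2)" for n
  proof -
    obtain v where "\<And>t. t\<in>{0..L n} \<Longrightarrow> (f n has_vector_derivative v t) (at t within {0..L n})"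
      "L n > 0 \<Longrightarrow> \<forall>t\<in>{0..L n}. norm (v t) = 1"
      "\<And>a s t. a > 0 \<Longrightarrow> s\<in>{0..L n} \<Longrightarrow> t\<in>{0..L n} \<Longrightarrow> norm (v t - v s) \<le> \<bar>t - s\<bar>/(2*a) + a*C0/2"
      using curve_key[OF cur[of n] W[of n] less_imp_le[OF WC[of n]]] by metis
    then show ?thesis by blast
  qed
  then obtain v where vd: "\<And>n t. t\<in>{0..L n} \<Longrightarrow> (f n has_vector_derivative v n t) (at t within {0..L n})"
    and vn: "\<And>n t. L n > 0 \<Longrightarrow> t\<in>{0..L n} \<Longrightarrow> norm (v n t) = 1"
    and vc: "\<And>n a s t. a > 0 \<Longrightarrow> s\<in>{0..L n} \<Longrightarrow> t\<in>{0..L n} \<Longrightarrow> norm (v n t - v n s) \<le> \<bar>t - s\<bar>/(2*a) + a*C0/2"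
    by metis
  have lip: "\<And>n s t. s \<in> {0..L n} \<Longrightarrow> t \<in> {0..L n} \<Longrightarrow> norm (f n s - f n t) \<le> \<bar>s - t\<bar>"
    using curve_lip[OF cur W] by blast
  define R0 where "R0 = R + B + (max 1 (M / measure \<mu> (space \<mu>)) + 1)"
  have f0: "norm (f n 0) \<le> R0" for n
    unfolding R0_def
  proof (rule start_bound[OF sets fin K R nz p L0 LB lip])
    show "(\<integral>\<^sup>+ x. ennreal ((infdist x (f n ` {0..L n})) powr p) \<partial>\<mu>) \<le> ennreal M"
      using energy_bounds(5)[OF En[of n] lam eps] unfolding curve_image_def L_def f_def .
  qed (use M0 in auto)
  have "bounded (range (\<lambda>n. (L n, f n 0)))"
  proof -
    have "range (\<lambda>n. (L n, f n 0)) \<subseteq> {0..B} \<times> cball 0 R0" using L0 LB f0 by auto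
    moreover have "bounded ({0..B} \<times> cball (0::'a) R0)" by (intro bounded_Times) auto
    ultimately show ?thesis using bounded_subset by blast
  qed
  then obtain l r1 where r1: "strict_mono r1" "((\<lambda>n. (L n, f n 0)) \<circ> r1) \<longlonglongrightarrow> l"
    using bounded_imp_convergent_subsequence by blast
  define Linf where "Linf = fst l"
  define X where "X = snd l"
  have Lr1: "(\<lambda>n. L (r1 n)) \<longlonglongrightarrow> Linf" unfolding Linf_def using tendsto_fst[OF r1(2)] by (simp add: o_def)
  have Xr1: "(\<lambda>n. f (r1 n) 0) \<longlonglongrightarrow> X" unfolding X_def using tendsto_snd[OF r1(2)] by (simp add: o_def)
  have Linf0: "Linf \<ge> 0" by (rule LIMSEQ_le_const[OF Lr1]) (use L0 in auto)
  show ?thesis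
  proof (cases "Linf = 0")
    case True
    define \<psi> where "\<psi> = (0::real, \<lambda>_::real. X)"
    have psi: "\<psi> \<in> curves"
    proof -
      have ae: "AE t in lborel. t \<in> {0..0::real} \<longrightarrow>
          (\<exists>w. ((\<lambda>_::real. X) has_vector_derivative w) (at t within {0..0}) \<and> norm w = 1)"
        by (rule AE_I'[of "{0}"]) auto
      have lp: "0-lipschitz_on {0..0::real} (\<lambda>_::real. X)" by (rule lipschitz_on_constant)
      show ?thesis unfolding curves_def \<psi>_def mem_Collect_eq prod.case using ae lp by blast
    qed
    define e where "e n = 2 * L (r1 n) + norm (f (r1 n) 0 - X)" for n
    have bnd: "0 \<le> curve_metric (\<phi> (r1 n)) \<psi> \<and> curve_metric (\<phi> (r1 n)) \<psi> \<le> e n" for n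
    proof -
      let ?m = "r1 n"
      have in1: "t * L ?m \<in> {0..L ?m}" "L ?m - t * L ?m \<in> {0..L ?m}" if "t \<in> {0..1}" for t
        using that L0[of ?m] mult_left_le_one_le[of "L ?m" t] by auto
      have b: "norm (f ?m s - X) \<le> L ?m + norm (f ?m 0 - X)" if "s \<in> {0..L ?m}" for s
      proof -
        have "norm (f ?m s - X) \<le> norm (f ?m s - f ?m 0) + norm (f ?m 0 - X)"
          by (rule norm_diff_triangle_le[of _ "f ?m 0"]) auto
        moreover have "norm (f ?m s - f ?m 0) \<le> L ?m" using lip[OF that, of 0] that L0[of ?m] by auto
        ultimately show ?thesis by simp
      qed
      have 1: "norm (Phi (\<phi> ?m) t - Phi \<psi> t) \<le> L ?m + norm (f ?m 0 - X)" if "t \<in> {0..1}" for t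
        using b[OF in1(1)[OF that]] unfolding Phi_def \<psi>_def f_def L_def by simp
      have 2: "norm (Phi_rev (\<phi> ?m) t - Phi \<psi> t) \<le> L ?m + norm (f ?m 0 - X)" if "t \<in> {0..1}" for t
        using b[OF in1(2)[OF that]] unfolding Phi_rev_def Phi_def \<psi>_def f_def L_def by simp
      show ?thesis using metric_small[OF 1 2] L0[of ?m] unfolding e_def \<psi>_def L_def by simp
    qed
    have "e \<longlonglongrightarrow> 2 * 0 + norm (X - X)" unfolding e_def
      by (intro tendsto_intros Lr1[unfolded True] Xr1)
    then have "e \<longlonglongrightarrow> 0" by simp
    then have "(\<lambda>n. curve_metric (\<phi> (r1 n)) \<psi>) \<longlonglongrightarrow> 0"
      by (rule tendsto_sandwich[rotated 2, OF tendsto_const]) (use bnd in auto)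
    then show ?thesis using psi r1(1) by blast
  next
    case False
    then have Lpos: "Linf > 0" using Linf0 by simp
    have "eventually (\<lambda>n. L (r1 n) > Linf/2) sequentially"
      using order_tendstoD(1)[OF Lr1, of "Linf/2"] Lpos by simp
    then obtain N where N: "\<And>n. n \<ge> N \<Longrightarrow> L (r1 n) > Linf/2"
      by (auto simp: eventually_sequentially)
    define r2 where "r2 n = r1 (n + N)" for n
    have Lr2pos: "L (r2 n) > 0" for n using N[of "n+N"] Lpos unfolding r2_def by simp
    have inI: "t * L m \<in> {0..L m}" if "t \<in> {0..1}" for t m
      using that L0[of m] mult_left_le_one_le[of "L m" t] by auto
    define G where "G n t = v (r2 n) (t * L (r2 n))" for n t
    have Gn: "norm (G n t) = 1" if "t \<in> {0..1}" for n t
      using vn[OF Lr2pos inI[OF that]] unfolding G_def by simp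
    have Geq: "\<exists>d. 0 < d \<and> (\<forall>n y. y \<in> {0..1} \<and> norm (x - y) < d \<longrightarrow> norm (G n x - G n y) < e)"
      if x: "x \<in> {0..1}" and e: "0 < e" for x e
    proof -
      define a where "a = e / (C0 + 1)"
      have a: "a > 0" using e C0 unfolding a_def by simp
      define d where "d = a * e / (B + 1)"
      have d: "d > 0" using a e B0 unfolding d_def by simp
      have h2: "B * d / (2*a) < e/2"
      proof -
        have "B * d / (2*a) = (B / (B+1)) * (e/2)" unfolding d_def using a B0 by (simp add: divide_simps)
        also have "\<dots> < 1 * (e/2)" using B0 e by (intro mult_strict_right_mono) auto
        finally show ?thesis by simp
      qed
      have h3: "a*C0/2 < e/2"
      proof -
        have "a*C0/2 = (C0 / (C0+1)) * (e/2)" unfolding a_def using C0 by (simp add: divide_simps)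
        also have "\<dots> < 1 * (e/2)" using C0 e by (intro mult_strict_right_mono) auto
        finally show ?thesis by simp
      qed
      show ?thesis
      proof (intro exI[of _ d] conjI allI impI d)
        fix n y assume y: "y \<in> {0..1} \<and> norm (x - y) < d"
        let ?m = "r2 n"
        have "norm (G n x - G n y) \<le> \<bar>x * L ?m - y * L ?m\<bar>/(2*a) + a*C0/2"
          unfolding G_def by (rule vc[OF a inI[OF y[THEN conjunct1]] inI[OF x]])
        moreover have "\<bar>x * L ?m - y * L ?m\<bar> \<le> B * d"
        proof -
          have "\<bar>x * L ?m - y * L ?m\<bar> = \<bar>x - y\<bar> * L ?m" using L0[of ?m] by (simp add: abs_mult left_diff_distrib[symmetric])
          also have "\<dots> \<le> d * B" using y LB[of ?m] L0[of ?m] by (intro mult_mono) auto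
          finally show ?thesis by (simp add: mult.commute)
        qed
        then have "\<bar>x * L ?m - y * L ?m\<bar>/(2*a) \<le> B * d / (2*a)" using a by (intro divide_right_mono) auto
        ultimately show "norm (G n x - G n y) < e" using h2 h3 by linarith
      qed
    qed
    obtain g k where gc: "continuous_on {0..1} g" and k: "strict_mono (k :: nat \<Rightarrow> nat)"
      and gu: "\<And>e. 0 < e \<Longrightarrow> \<exists>N. \<forall>n x. n \<ge> N \<and> x \<in> {0..1} \<longrightarrow> norm (G (k n) x - g x) < e"
      using Arzela_Ascoli[of "{0..1::real}" G 1] Gn Geq by (metis compact_Icc order.refl)
    define r where "r n = r2 (k n)" for n
    have rN: "r = r1 \<circ> (\<lambda>n. k n + N)" unfolding r_def r2_def by auto
    have kN: "strict_mono (\<lambda>n. k n + N)" using k unfolding strict_mono_def by auto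
    have rm: "strict_mono r" unfolding rN using r1(1) kN by (rule strict_mono_o)
    have Lr: "(\<lambda>n. L (r n)) \<longlonglongrightarrow> Linf"
      using LIMSEQ_subseq_LIMSEQ[OF Lr1 kN] unfolding rN by (simp add: o_def)
    have Xr: "(\<lambda>n. f (r n) 0) \<longlonglongrightarrow> X"
      using LIMSEQ_subseq_LIMSEQ[OF Xr1 kN] unfolding rN by (simp add: o_def)
    have Grk: "G (k n) t = v (r n) (t * L (r n))" for n t unfolding G_def r_def ..
    define F where "F n t = f (r n) (t * L (r n))" for n t
    have Fd: "(F n has_vector_derivative (L (r n) *\<^sub>R G (k n) t)) (at t within {0..1})"
      if t: "t \<in> {0..1}" for n t
    proof -
      have "((\<lambda>t. t * L (r n)) has_real_derivative L (r n)) (at t within {0..1})"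
        by (auto intro!: derivative_eq_intros)
      then have d1: "((\<lambda>t. t * L (r n)) has_vector_derivative L (r n)) (at t within {0..1})"
        by (simp add: has_real_derivative_iff_has_vector_derivative)
      have d2: "(f (r n) has_vector_derivative v (r n) (t * L (r n))) (at (t * L (r n)) within (\<lambda>t. t * L (r n)) ` {0..1})"
        by (rule has_vector_derivative_within_subset[OF vd[OF inI[OF t]]]) (use inI in auto)
      show ?thesis using vector_diff_chain_within[OF d1 d2] unfolding F_def Grk o_def by simp
    qed
    have dconv: "eventually (\<lambda>n. \<forall>x\<in>{0..1}. norm (L (r n) *\<^sub>R G (k n) x - Linf *\<^sub>R g x) \<le> e) sequentially"
      if e: "e > 0" for e
    proof -
      have ev1: "eventually (\<lambda>n. \<bar>L (r n) - Linf\<bar> < e/2) sequentially"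
        using Lr[unfolded tendsto_iff dist_real_def, rule_format, of "e/2"] e by simp
      obtain N1 where N1: "\<forall>n x. n \<ge> N1 \<and> x \<in> {0..1} \<longrightarrow> norm (G (k n) x - g x) < e / (2 * (Linf + 1))"
        using gu[of "e / (2 * (Linf + 1))"] e Lpos by auto
      have ev2: "eventually (\<lambda>n. \<forall>x\<in>{0..1}. norm (G (k n) x - g x) < e / (2 * (Linf + 1))) sequentially"
        unfolding eventually_sequentially using N1 by (intro exI[of _ N1]) auto
      show ?thesis
      proof (rule eventually_mono[OF eventually_conj[OF ev1 ev2]], intro ballI)
        fix n and x :: real assume H: "\<bar>L (r n) - Linf\<bar> < e/2 \<and> (\<forall>x\<in>{0..1}. norm (G (k n) x - g x) < e / (2 * (Linf + 1)))"
          and x: "x \<in> {0..1}"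
        have "L (r n) *\<^sub>R G (k n) x - Linf *\<^sub>R g x = (L (r n) - Linf) *\<^sub>R G (k n) x + Linf *\<^sub>R (G (k n) x - g x)"
          by (simp add: algebra_simps)
        then have i1: "norm (L (r n) *\<^sub>R G (k n) x - Linf *\<^sub>R g x) \<le> \<bar>L (r n) - Linf\<bar> * norm (G (k n) x) + Linf * norm (G (k n) x - g x)"
          using Lpos by (metis (no_types, lifting) abs_of_pos norm_scaleR norm_triangle_ineq)
        have i2: "norm (G (k n) x) = 1" using Gn[OF x] .
        have i3: "Linf * norm (G (k n) x - g x) \<le> Linf * (e / (2 * (Linf + 1)))"
          using H x Lpos by (intro mult_left_mono) (auto intro: less_imp_le)
        have i4: "Linf * (e / (2 * (Linf + 1))) \<le> e/2"
          using Lpos e by (simp add: divide_simps)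
        show "norm (L (r n) *\<^sub>R G (k n) x - Linf *\<^sub>R g x) \<le> e" using H[THEN conjunct1] i1[unfolded i2 mult_1_right] i3 i4 by linarith
      qed
    qed
    have "\<exists>fl. \<forall>x\<in>{0..1}. (\<lambda>n. F n x) \<longlonglongrightarrow> fl x \<and> (fl has_derivative (\<lambda>h. h *\<^sub>R (Linf *\<^sub>R g x))) (at x within {0..1})"
    proof (rule has_derivative_sequence[where f' = "\<lambda>n x h. h *\<^sub>R (L (r n) *\<^sub>R G (k n) x)" and l = X])
      show "convex {0..1::real}" by simp
      show "(F n has_derivative (\<lambda>h. h *\<^sub>R (L (r n) *\<^sub>R G (k n) x))) (at x within {0..1})"
        if "x \<in> {0..1}" for n x using Fd[OF that] unfolding has_vector_derivative_def .
      show "\<forall>\<^sub>F n in sequentially. \<forall>x\<in>{0..1}. \<forall>h. norm (h *\<^sub>R (L (r n) *\<^sub>R G (k n) x) - h *\<^sub>R (Linf *\<^sub>R g x)) \<le> e * norm h"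
        if "e > 0" for e
      proof (rule eventually_mono[OF dconv[OF that]], intro ballI allI)
        fix n and x h :: real assume H: "\<forall>x\<in>{0..1}. norm (L (r n) *\<^sub>R G (k n) x - Linf *\<^sub>R g x) \<le> e" and x: "x \<in> {0..1}"
        have "norm (h *\<^sub>R (L (r n) *\<^sub>R G (k n) x) - h *\<^sub>R (Linf *\<^sub>R g x)) = \<bar>h\<bar> * norm (L (r n) *\<^sub>R G (k n) x - Linf *\<^sub>R g x)"
          by (simp only: scaleR_diff_right[symmetric] norm_scaleR)
        also have "\<dots> \<le> \<bar>h\<bar> * e" using H x by (intro mult_left_mono) auto
        finally show "norm (h *\<^sub>R (L (r n) *\<^sub>R G (k n) x) - h *\<^sub>R (Linf *\<^sub>R g x)) \<le> e * norm h"
          by (simp add: mult.commute)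
      qed
      show "(0::real) \<in> {0..1}" by simp
      show "(\<lambda>n. F n 0) \<longlonglongrightarrow> X" using Xr unfolding F_def by simp
    qed
    then obtain fl where flc: "\<And>x. x\<in>{0..1} \<Longrightarrow> (\<lambda>n. F n x) \<longlonglongrightarrow> fl x"
      and fld: "\<And>x. x\<in>{0..1} \<Longrightarrow> (fl has_vector_derivative (Linf *\<^sub>R g x)) (at x within {0..1})"
      unfolding has_vector_derivative_def by blast
    have fl0: "fl 0 = X"
      using LIMSEQ_unique[OF flc[of 0] Xr[folded F_def[of _ 0, simplified]]] by (simp add: F_def)
    have gn: "norm (g t) = 1" if t: "t \<in> {0..1}" for t
    proof -
      have "(\<lambda>n. G (k n) t) \<longlonglongrightarrow> g t"
        unfolding LIMSEQ_iff using gu t by (metis less_imp_le order.strict_trans1 order_refl)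
      then have "(\<lambda>n. norm (G (k n) t)) \<longlonglongrightarrow> norm (g t)" by (rule tendsto_norm)
      moreover have "(\<lambda>n. norm (G (k n) t)) = (\<lambda>n. 1)" using Gn[OF t] by simp
      ultimately show ?thesis using LIMSEQ_unique tendsto_const by metis
    qed
    have unif: "eventually (\<lambda>n. \<forall>t\<in>{0..1}. norm (F n t - fl t) \<le> 2*e) sequentially" if e: "e > 0" for e
    proof -
      have ev0: "eventually (\<lambda>n. norm (F n 0 - X) < e) sequentially"
        using Xr e unfolding tendsto_iff dist_norm F_def by auto
      show ?thesis
      proof (rule eventually_mono[OF eventually_conj[OF ev0 dconv[OF e]]], intro ballI)
        fix n and t :: real assume H: "norm (F n 0 - X) < e \<and> (\<forall>x\<in>{0..1}. norm (L (r n) *\<^sub>R G (k n) x - Linf *\<^sub>R g x) \<le> e)"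
          and t: "t \<in> {0..1}"
        have "norm ((F n t - fl t) - (F n 0 - fl 0)) \<le> e * \<bar>t - 0\<bar>"
        proof (rule vd_bound[where f = "\<lambda>t. F n t - fl t" and S = "{0..1}"])
          show "((\<lambda>t. F n t - fl t) has_vector_derivative (L (r n) *\<^sub>R G (k n) x - Linf *\<^sub>R g x)) (at x within {0..1})"
            if "x \<in> {0..1}" for x using Fd[OF that] fld[OF that] by (rule has_vector_derivative_diff)
        qed (use H t in auto)
        then have "norm ((F n t - fl t) - (F n 0 - fl 0)) \<le> e" using t e by (smt (verit) atLeastAtMost_iff mult_left_le)
        then show "norm (F n t - fl t) \<le> 2*e" using H fl0 norm_triangle_ineq[of "(F n t - fl t) - (F n 0 - fl 0)" "F n 0 - fl 0"]
          by simp
      qed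
    qed
    define \<psi> where "\<psi> = (Linf, \<lambda>s. fl (s / Linf))"
    have psi: "\<psi> \<in> curves"
    proof -
      have flip: "norm (fl a - fl b) \<le> Linf * \<bar>a - b\<bar>" if "a \<in> {0..1}" "b \<in> {0..1}" for a b
        using vd_bound[of "{0..1}" fl "\<lambda>x. Linf *\<^sub>R g x" Linf a b] fld gn Lpos that by auto
      have lp: "1-lipschitz_on {0..Linf} (\<lambda>s. fl (s / Linf))"
      proof (rule lipschitz_onI)
        fix x y assume x: "x \<in> {0..Linf}" and y: "y \<in> {0..Linf}"
        have xI: "x / Linf \<in> {0..1}" and yI: "y / Linf \<in> {0..1}" using x y Lpos by (auto simp: divide_simps)
        have "dist (fl (x / Linf)) (fl (y / Linf)) \<le> Linf * \<bar>x / Linf - y / Linf\<bar>"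
          using flip[OF xI yI] by (simp add: dist_norm)
        also have "Linf * \<bar>x / Linf - y / Linf\<bar> = \<bar>x - y\<bar>"
          using Lpos by (simp add: diff_divide_distrib[symmetric] abs_divide)
        finally show "dist (fl (x / Linf)) (fl (y / Linf)) \<le> 1 * dist x y" by (simp add: dist_real_def)
      qed simp
      have ae: "AE t in lborel. t \<in> {0..Linf} \<longrightarrow>
          (\<exists>w. ((\<lambda>s. fl (s / Linf)) has_vector_derivative w) (at t within {0..Linf}) \<and> norm w = 1)"
      proof (rule AE_I2, intro impI exI conjI)
        fix t assume t: "t \<in> {0..Linf}"
        have tI: "t / Linf \<in> {0..1}" using t Lpos by (auto simp: divide_simps)
        have "((\<lambda>s. s / Linf) has_real_derivative 1 / Linf) (at t within {0..Linf})"
          using Lpos by (auto intro!: derivative_eq_intros)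
        then have d1: "((\<lambda>s. s / Linf) has_vector_derivative 1 / Linf) (at t within {0..Linf})"
          by (simp add: has_real_derivative_iff_has_vector_derivative)
        have d2: "(fl has_vector_derivative (Linf *\<^sub>R g (t / Linf))) (at (t / Linf) within (\<lambda>s. s / Linf) ` {0..Linf})"
          by (rule has_vector_derivative_within_subset[OF fld[OF tI]]) (use Lpos in \<open>auto simp: divide_simps\<close>)
        show "((\<lambda>s. fl (s / Linf)) has_vector_derivative g (t / Linf)) (at t within {0..Linf})"
          using vector_diff_chain_within[OF d1 d2] Lpos by (simp add: o_def)
        show "norm (g (t / Linf)) = 1" using gn[OF tI] .
      qed
      show ?thesis unfolding curves_def \<psi>_def mem_Collect_eq prod.case using ae lp Linf0 by blast
    qed
    have Phi1: "Phi (\<phi> (r n)) t = F n t" for n t unfolding Phi_def F_def f_def L_def ..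
    have Phi2: "Phi \<psi> t = fl t" for t unfolding Phi_def \<psi>_def using Lpos by simp
    have Phi3: "Phi_rev (\<phi> (r n)) t = f (r n) ((1 - t) * L (r n))" for n t
      unfolding Phi_rev_def f_def L_def by (simp add: algebra_simps)
    have "(\<lambda>n. curve_metric (\<phi> (r n)) \<psi>) \<longlonglongrightarrow> 0"
      unfolding tendsto_iff
    proof (intro allI impI)
      fix e :: real assume e: "e > 0"
      have ev1: "eventually (\<lambda>n. \<bar>L (r n) - Linf\<bar> < e/4) sequentially"
        using Lr[unfolded tendsto_iff dist_real_def, rule_format, of "e/4"] e by simp
      show "eventually (\<lambda>n. dist (curve_metric (\<phi> (r n)) \<psi>) 0 < e) sequentially"
      proof (rule eventually_mono[OF eventually_conj[OF ev1 unif[of "e/4"]]])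
        fix n assume H: "\<bar>L (r n) - Linf\<bar> < e/4 \<and> (\<forall>t\<in>{0..1}. norm (F n t - fl t) \<le> 2*(e/4))"
        have 1: "norm (Phi (\<phi> (r n)) t - Phi \<psi> t) \<le> 2*(e/4)" if "t \<in> {0..1}" for t
          using H that unfolding Phi1 Phi2 by auto
        have 2: "norm (Phi_rev (\<phi> (r n)) t - Phi \<psi> t) \<le> B + 2*(e/4)" if t: "t \<in> {0..1}" for t
        proof -
          have t1: "1 - t \<in> {0..1}" using t by auto
          have "norm (f (r n) ((1 - t) * L (r n)) - f (r n) (t * L (r n))) \<le> \<bar>(1 - t) * L (r n) - t * L (r n)\<bar>"
            by (rule lip[OF inI[OF t1] inI[OF t]])
          also have "\<dots> \<le> B" using inI[OF t1, of "r n"] inI[OF t, of "r n"] LB[of "r n"] by auto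
          finally have "norm (f (r n) ((1 - t) * L (r n)) - F n t) \<le> B" unfolding F_def .
          moreover have "norm (F n t - fl t) \<le> 2*(e/4)" using H t by blast
          moreover have "norm (f (r n) ((1 - t) * L (r n)) - fl t) \<le> norm (f (r n) ((1 - t) * L (r n)) - F n t) + norm (F n t - fl t)"
            using norm_triangle_ineq[of "f (r n) ((1 - t) * L (r n)) - F n t" "F n t - fl t"] by simp
          ultimately show ?thesis unfolding Phi3 Phi2 by linarith
        qed
        have "0 \<le> curve_metric (\<phi> (r n)) \<psi>" "curve_metric (\<phi> (r n)) \<psi> \<le> 2*(e/4) + \<bar>fst (\<phi> (r n)) - fst \<psi>\<bar>"
          using metric_small[OF 1 2] by auto
        moreover have "\<bar>fst (\<phi> (r n)) - fst \<psi>\<bar> < e/4" using H unfolding \<psi>_def L_def by simp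
        ultimately show "dist (curve_metric (\<phi> (r n)) \<psi>) 0 < e" unfolding dist_real_def by simp
      qed (use e in auto)
    qed
    then show ?thesis using psi rm by blast
  qed
qed

end
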